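(* Let $\mathfrak B,\mathfrak D^+,\mathfrak D^-$ be Banach spaces and let $I^+\colon\mathfrak D^+\to\mathfrak B$, $I^-\colon\mathfrak B\to\mathfrak D^-$ be injective continuous linear embeddings with dense ranges. Let $T\colon\mathfrak D^+\to\mathfrak D^-$ be a bounded linear operator, and let $T^\bullet=(I^-)^{-1}T(I^+)^{-1}$ be the operator in $\mathfrak B$ with domain $\{x\in I^+(\mathfrak D^+)\;:\;T(I^+)^{-1}x\in I^-(\mathfrak B)\}$, acting by $T^\bullet x=(I^-)^{-1}T(I^+)^{-1}x$. Suppose that for some $A\in\mathcal B(\mathfrak B)$ the operator $T-I^-AI^+$ has a bounded inverse. Then for every $\lambda$ in the resolvent set $\varrho(T^\bullet)$ the operator $T-\lambda I^-I^+\colon\mathfrak D^+\to\mathfrak D^-$ also has a bounded inverse.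
   Context: "Has a bounded inverse" means: the operator is a bijection of $\mathfrak D^+$ onto $\mathfrak D^-$ with bounded inverse. *)

theory Defs
  imports "HOL-Analysis.Analysis"
begin

class complex_vector = real_vector +
  fixes scaleC :: "complex \<Rightarrow> 'a \<Rightarrow> 'a" (infixr \<open>*\<^sub>C\<close> 75)
  assumes scaleC_add_right: "a *\<^sub>C (x + y) = a *\<^sub>C x + a *\<^sub>C y"
    and scaleC_add_left: "(a + b) *\<^sub>C x = a *\<^sub>C x + b *\<^sub>C x"
    and scaleC_scaleC: "a *\<^sub>C (b *\<^sub>C x) = (a * b) *\<^sub>C x"
    and scaleC_one: "1 *\<^sub>C x = x"
    and scaleR_scaleC: "scaleR r x = (complex_of_real r) *\<^sub>C x"

class complex_normed_vector = complex_vector + real_normed_vector +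
  assumes norm_scaleC: "norm (a *\<^sub>C x) = cmod a * norm x"

definition bounded_clinear :: "('a::complex_normed_vector \<Rightarrow> 'b::complex_normed_vector) \<Rightarrow> bool" where
  "bounded_clinear f \<longleftrightarrow> bounded_linear f \<and> (\<forall>c x. f (c *\<^sub>C x) = c *\<^sub>C f x)"

definition has_bounded_inverse :: "('a::complex_normed_vector \<Rightarrow> 'b::complex_normed_vector) \<Rightarrow> bool" where
  "has_bounded_inverse S \<longleftrightarrow> bij S \<and> bounded_clinear (inv S)"

definition resolvent_set :: "'a::complex_normed_vector set \<Rightarrow> ('a \<Rightarrow> 'a) \<Rightarrow> complex set" where
  "resolvent_set D S = {z. bij_betw (\<lambda>x. S x - z *\<^sub>C x) D UNIV \<and>
      bounded_clinear (the_inv_into D (\<lambda>x. S x - z *\<^sub>C x))}"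

definition bullet_dom :: "('p \<Rightarrow> 'b) \<Rightarrow> ('b \<Rightarrow> 'm) \<Rightarrow> ('p \<Rightarrow> 'm) \<Rightarrow> 'b set" where
  "bullet_dom Jp Jm T = {x \<in> range Jp. T (inv Jp x) \<in> range Jm}"

definition bullet_op :: "('p \<Rightarrow> 'b) \<Rightarrow> ('b \<Rightarrow> 'm) \<Rightarrow> ('p \<Rightarrow> 'm) \<Rightarrow> 'b \<Rightarrow> 'b" where
  "bullet_op Jp Jm T x = inv Jm (T (inv Jp x))"

end

theory Submission
  imports Defs
begin

lemma scaleC_diff_right': "(a::complex) *\<^sub>C ((x::'a::complex_vector) - y) = a *\<^sub>C x - a *\<^sub>C y"
proof -
  have "a *\<^sub>C (x - y) + a *\<^sub>C y = a *\<^sub>C x" by (metis scaleC_add_right diff_add_cancel)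
  thus ?thesis by (simp add: eq_diff_eq)
qed

lemma scaleC_zero_right': "(a::complex) *\<^sub>C (0::'a::complex_vector) = 0"
  using scaleC_diff_right'[of a "0::'a" 0] by simp

lemma scaleC_scaleR_comm: "(a::complex) *\<^sub>C (r *\<^sub>R (x::'a::complex_vector)) = r *\<^sub>R (a *\<^sub>C x)"
  by (simp add: scaleR_scaleC scaleC_scaleC mult.commute)

lemma bclin_lin: "bounded_clinear f \<Longrightarrow> bounded_linear f"
  by (simp add: bounded_clinear_def)

lemma bclin_scale: "bounded_clinear f \<Longrightarrow> f (c *\<^sub>C x) = c *\<^sub>C f x"
  by (simp add: bounded_clinear_def)

lemma bclin_id: "bounded_clinear (\<lambda>x. x)"
  by (simp add: bounded_clinear_def bounded_linear_ident)

lemma bclin_compose: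
  "bounded_clinear f \<Longrightarrow> bounded_clinear g \<Longrightarrow> bounded_clinear (\<lambda>x. f (g x))"
  unfolding bounded_clinear_def
  using bounded_linear_compose by auto

lemma bclin_add:
  "bounded_clinear f \<Longrightarrow> bounded_clinear g \<Longrightarrow> bounded_clinear (\<lambda>x. f x + g x)"
  unfolding bounded_clinear_def
  using bounded_linear_add by (auto simp: scaleC_add_right)

lemma bclin_diff:
  "bounded_clinear f \<Longrightarrow> bounded_clinear g \<Longrightarrow> bounded_clinear (\<lambda>x. f x - g x)"
  unfolding bounded_clinear_def
  using bounded_linear_sub by (auto simp: scaleC_diff_right')

lemma bclin_scaleC: "bounded_clinear (\<lambda>x::'a::complex_normed_vector. c *\<^sub>C x)"
  unfolding bounded_clinear_def
proof (intro conjI allI)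
  show "bounded_linear (\<lambda>x::'a. c *\<^sub>C x)"
  proof (rule bounded_linear_intro[where K="cmod c"])
    fix x y :: 'a show "c *\<^sub>C (x + y) = c *\<^sub>C x + c *\<^sub>C y" by (rule scaleC_add_right)
  next
    fix r and x :: 'a show "c *\<^sub>C (r *\<^sub>R x) = r *\<^sub>R (c *\<^sub>C x)" by (rule scaleC_scaleR_comm)
  next
    fix x :: 'a show "norm (c *\<^sub>C x) \<le> norm x * cmod c" by (simp add: norm_scaleC mult.commute)
  qed
next
  fix a x show "c *\<^sub>C (a *\<^sub>C (x::'a)) = a *\<^sub>C (c *\<^sub>C x)" by (simp add: scaleC_scaleC mult.commute)
qed

theorem mainTheorem3:
  fixes Jp :: "'p::{complex_normed_vector,banach} \<Rightarrow> 'b::{complex_normed_vector,banach}"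
    and Jm :: "'b \<Rightarrow> 'm::{complex_normed_vector,banach}"
    and T :: "'p \<Rightarrow> 'm"
    and A :: "'b \<Rightarrow> 'b"
    and z :: complex
  assumes Jp: "bounded_clinear Jp" "inj Jp" "closure (range Jp) = UNIV"
    and Jm: "bounded_clinear Jm" "inj Jm" "closure (range Jm) = UNIV"
    and T: "bounded_clinear T"
    and A: "bounded_clinear A"
    and inv_A: "has_bounded_inverse (\<lambda>x. T x - Jm (A (Jp x)))"
    and lam: "z \<in> resolvent_set (bullet_dom Jp Jm T) (bullet_op Jp Jm T)"
  shows "has_bounded_inverse (\<lambda>x. T x - z *\<^sub>C Jm (Jp x))"
proof -
  define R where "R = (\<lambda>x. T x - Jm (A (Jp x)))"
  define Ri where "Ri = inv R"
  define D where "D = bullet_dom Jp Jm T"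
  define B where "B = (\<lambda>x. bullet_op Jp Jm T x - z *\<^sub>C x)"
  define G where "G = the_inv_into D B"
  define S where "S = (\<lambda>x. T x - z *\<^sub>C Jm (Jp x))"
  have bijR: "bij R" and Ri: "bounded_clinear Ri"
    using inv_A unfolding has_bounded_inverse_def R_def Ri_def by auto
  have bijB: "bij_betw B D UNIV" and G: "bounded_clinear G"
    using lam unfolding resolvent_set_def D_def B_def G_def by auto
  interpret Jp: bounded_linear Jp using Jp(1) by (rule bclin_lin)
  interpret Jm: bounded_linear Jm using Jm(1) by (rule bclin_lin)
  interpret T: bounded_linear T using T by (rule bclin_lin)
  interpret A: bounded_linear A using A by (rule bclin_lin)
  have RRi: "R (Ri m) = m" for m
    unfolding Ri_def using bijR by (simp add: bij_is_surj surj_f_inv_f)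
  have RiR: "Ri (R x) = x" for x
    unfolding Ri_def using bijR by (simp add: bij_is_inj)
  have GD: "G v \<in> D" for v
    unfolding G_def using bijB by (simp add: bij_betw_def the_inv_into_into)
  have BG: "B (G v) = v" for v
    unfolding G_def using bijB by (simp add: f_the_inv_into_f_bij_betw)
  have injB: "inj_on B D" using bijB by (simp add: bij_betw_def)
  have Dchar: "\<exists>p q. d = Jp p \<and> T p = Jm q \<and> bullet_op Jp Jm T d = q" if "d \<in> D" for d
  proof -
    from that obtain p where p: "d = Jp p" and "T (inv Jp d) \<in> range Jm"
      unfolding D_def bullet_dom_def by auto
    moreover have "inv Jp d = p" using p Jp(2) by simp
    ultimately obtain q where "T p = Jm q" by auto
    thus ?thesis using p \<open>inv Jp d = p\<close> Jm(2) unfolding bullet_op_def by auto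
  qed
  have JmC: "z *\<^sub>C Jm w = Jm (z *\<^sub>C w)" for w using bclin_scale[OF Jm(1)] by simp
  define F where "F = (\<lambda>m. Ri m + Ri (Jm (z *\<^sub>C (Jp (Ri m) + G (z *\<^sub>C Jp (Ri m) - A (Jp (Ri m))))
       - A (Jp (Ri m) + G (z *\<^sub>C Jp (Ri m) - A (Jp (Ri m)))))))"
  have SF: "S (F m) = m" for m
  proof -
    define y where "y = Ri m"
    define u where "u = Jp y"
    define v where "v = z *\<^sub>C u - A u"
    define d where "d = G v"
    obtain p q where pq: "d = Jp p" "T p = Jm q" "bullet_op Jp Jm T d = q"
      using Dchar[OF GD] d_def by blast
    have qv: "q - z *\<^sub>C d = v" using BG[of v] pq(3) unfolding B_def d_def by simp
    define c where "c = z *\<^sub>C (u + d) - A (u + d)"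
    have c: "c = q - A d" using qv unfolding c_def v_def
      by (simp add: scaleC_add_right A.add algebra_simps)
    have "R p = Jm c" unfolding R_def c using pq by (simp add: Jm.diff)
    hence "Ri (Jm c) = p" using RiR by metis
    hence Fm: "F m = y + p" unfolding F_def y_def[symmetric] u_def[symmetric]
      v_def[symmetric] d_def[symmetric] c_def[symmetric] by simp
    have Ty: "T y = m + Jm (A u)" using RRi[of m] unfolding R_def y_def u_def by (simp add: algebra_simps)
    have "S (y + p) = m + Jm (A u + q - z *\<^sub>C u - z *\<^sub>C d)"
      unfolding S_def using Ty pq
      by (simp add: T.add Jp.add Jm.add Jm.diff scaleC_add_right JmC[symmetric] u_def algebra_simps)
    also have "A u + q - z *\<^sub>C u - z *\<^sub>C d = 0" using qv unfolding v_def by (simp add: algebra_simps)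
    finally show ?thesis using Fm by (simp add: Jm.zero)
  qed
  have S0: "x = 0" if "S x = 0" for x
  proof -
    have Tx: "T x = Jm (z *\<^sub>C Jp x)" using that unfolding S_def by (simp add: JmC)
    have ix: "inv Jp (Jp x) = x" using Jp(2) by simp
    have dD: "Jp x \<in> D" unfolding D_def bullet_dom_def using ix Tx by auto
    have "B (Jp x) = 0" unfolding B_def bullet_op_def using ix Tx Jm(2) by simp
    moreover have i0: "inv Jp 0 = 0" using Jp(2) Jp.zero by (metis inv_f_f)
    have i0': "inv Jm 0 = 0" using Jm(2) Jm.zero by (metis inv_f_f)
    have "(0::'b) \<in> D" unfolding D_def bullet_dom_def using i0 T.zero Jm.zero Jp.zero
      by (metis (mono_tags, lifting) mem_Collect_eq rangeI)
    moreover have "B 0 = 0" unfolding B_def bullet_op_def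
      by (simp only: i0 i0' T.zero scaleC_zero_right' diff_self)
    ultimately have "Jp x = 0" using injB dD by (metis inj_onD)
    thus ?thesis using Jp(2) Jp.zero by (metis injD)
  qed
  have Slin: "bounded_clinear S" unfolding S_def
    by (intro bclin_diff T bclin_compose[OF bclin_scaleC] bclin_compose[OF Jm(1)] Jp(1))
  interpret S: bounded_linear S using Slin by (rule bclin_lin)
  have injS: "inj S"
  proof (rule injI)
    fix x y assume "S x = S y"
    hence "S (x - y) = 0" by (simp add: S.diff)
    hence "x - y = 0" by (rule S0)
    thus "x = y" by simp
  qed
  have surjS: "surj S" using SF by (metis surjI)
  have invS: "inv S = F"
  proof
    fix m show "inv S m = F m" using SF injS by (metis inv_f_f)
  qed
  have Flin: "bounded_clinear F" unfolding F_def
    by (intro bclin_add Ri bclin_compose[OF Ri] bclin_compose[OF Jm(1)] bclin_diff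
        bclin_compose[OF bclin_scaleC] bclin_compose[OF A] bclin_compose[OF Jp(1)]
        bclin_compose[OF G] bclin_id)
  show ?thesis unfolding has_bounded_inverse_def S_def[symmetric] invS
    using injS surjS Flin by (simp add: bij_def)
qed

end
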